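(* For each finite alphabet $\Sigma$, let $\mathcal{FV}(\Sigma)$ denote the class of regular languages $L\subseteq\Sigma^*$ having finite variation. Then $\mathcal{FV}$ is a $*$-variety of Eilenberg: for every finite alphabet $\Sigma$, $\mathcal{FV}(\Sigma)$ is closed under the boolean operations (union, intersection, complement in $\Sigma^*$), under left and right quotients by words ($L\mapsto u^{-1}L=\{x: ux\in L\}$ and $L\mapsto Lu^{-1}=\{x: xu\in L\}$ for $u\in\Sigma^*$), and for every monoid homomorphism $h:\Gamma^*\to\Sigma^*$ between free monoids over finite alphabets and every $L\in\mathcal{FV}(\Sigma)$, $h^{-1}(L)\in\mathcal{FV}(\Gamma)$.
   Context: Let $L\subseteq\Sigma^*$ be regular and let $\langle\Sigma,Q,\delta,q_0,F\rangle$ be the minimal deterministic automaton recognizing $L$; write $\delta(u)$ for the state reached from $q_0$ after reading $u\in\Sigma^*$. For $w=\sigma_1\cdots\sigma_n\in\Sigma^*$, its variation is $\mathrm{Var}_L(w)=\#\{0\le k<n : \delta(\sigma_1\cdots\sigma_k)\neq\delta(\sigma_1\cdots\sigma_{k+1})\}$. $L$ has finite variation iff $\sup_{x\in\Sigma^*}\mathrm{Var}_L(x)<\infty$. *)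

theory Defs
  imports Main
begin

text \<open>Alphabets are finite types 'a (Sigma = UNIV), words are lists, languages are word sets.\<close>

definition run :: "('s \<Rightarrow> 'a \<Rightarrow> 's) \<Rightarrow> 's \<Rightarrow> 'a list \<Rightarrow> 's" where
  "run delta q w = foldl delta q w"

definition regular :: "'a list set \<Rightarrow> bool" where
  "regular L \<longleftrightarrow> (\<exists>(Q::nat set) (delta :: nat \<Rightarrow> 'a \<Rightarrow> nat) q0 F.
     finite Q \<and> q0 \<in> Q \<and> (\<forall>q\<in>Q. \<forall>a. delta q a \<in> Q) \<and> F \<subseteq> Q \<and>
     L = {w. run delta q0 w \<in> F})"

text \<open>The minimal deterministic automaton of L (quotient / Nerode automaton): the state reached
  after reading u is the left quotient u^{-1}L.\<close>
definition min_state :: "'a list set \<Rightarrow> 'a list \<Rightarrow> 'a list set" where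
  "min_state L u = {x. u @ x \<in> L}"

definition Var :: "'a list set \<Rightarrow> 'a list \<Rightarrow> nat" where
  "Var L w = card {k. k < length w \<and> min_state L (take k w) \<noteq> min_state L (take (Suc k) w)}"

definition finite_variation :: "'a list set \<Rightarrow> bool" where
  "finite_variation L \<longleftrightarrow> (\<exists>B. \<forall>x. Var L x \<le> B)"

definition FV :: "'a list set set" where
  "FV = {L. regular L \<and> finite_variation L}"

definition monoid_hom :: "('b list \<Rightarrow> 'a list) \<Rightarrow> bool" where
  "monoid_hom h \<longleftrightarrow> h [] = [] \<and> (\<forall>x y. h (x @ y) = h x @ h y)"

end

theory Submission
  imports Defs
begin

definition chg :: "'a list set \<Rightarrow> 'a list \<Rightarrow> nat set" where
  "chg L w = {k. k < length w \<and> min_state L (take k w) \<noteq> min_state L (take (Suc k) w)}"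

lemma Var_chg: "Var L w = card (chg L w)"
  by (simp add: Var_def chg_def)

lemma finite_chg: "finite (chg L w)"
  unfolding chg_def by (rule finite_subset[of _ "{..<length w}"]) auto

lemma change_between:
  assumes "i \<le> j" "min_state L (take i x) \<noteq> min_state L (take j x)"
  shows "\<exists>p. i \<le> p \<and> p < j \<and> min_state L (take p x) \<noteq> min_state L (take (Suc p) x)"
  using assms
proof (induction j)
  case 0 then show ?case by simp
next
  case (Suc j)
  show ?case
  proof (cases "i \<le> j")
    case True
    show ?thesis
    proof (cases "min_state L (take i x) = min_state L (take j x)")
      case True
      then show ?thesis using Suc.prems \<open>i \<le> j\<close> by auto
    next
      case False
      then obtain p where "i \<le> p \<and> p < j \<and> min_state L (take p x) \<noteq> min_state L (take (Suc p) x)"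
        using Suc.IH \<open>i \<le> j\<close> by blast
      then show ?thesis by (intro exI[of _ p]) auto
    qed
  next
    case False
    then have "i = Suc j" using Suc.prems by simp
    then show ?thesis using Suc.prems by simp
  qed
qed

lemma var_mono:
  assumes mono: "\<And>k. k < length w \<Longrightarrow> \<phi> k \<le> \<phi> (Suc k)"
  and bound: "\<phi> (length w) \<le> length x"
  and transfer: "\<And>k. k < length w \<Longrightarrow> min_state L (take (\<phi> k) x) = min_state L (take (\<phi> (Suc k)) x)
      \<Longrightarrow> min_state M (take k w) = min_state M (take (Suc k) w)"
  shows "Var M w \<le> Var L x"
proof -
  have mono': "\<phi> k \<le> \<phi> k'" if "k \<le> k'" "k' \<le> length w" for k k'
    using that
  proof (induction k' rule: dec_induct)
    case base then show ?case by simp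
  next
    case (step n) then show ?case using mono[of n] by simp
  qed
  have "\<forall>k\<in>chg M w. \<exists>p. \<phi> k \<le> p \<and> p < \<phi> (Suc k) \<and> p \<in> chg L x"
  proof
    fix k assume k: "k \<in> chg M w"
    then have kl: "k < length w" and ne: "min_state M (take k w) \<noteq> min_state M (take (Suc k) w)"
      by (auto simp: chg_def)
    have "min_state L (take (\<phi> k) x) \<noteq> min_state L (take (\<phi> (Suc k)) x)"
      using transfer[OF kl] ne by blast
    then obtain p where p: "\<phi> k \<le> p" "p < \<phi> (Suc k)"
        "min_state L (take p x) \<noteq> min_state L (take (Suc p) x)"
      using change_between[OF mono[OF kl]] by blast
    have "\<phi> (Suc k) \<le> length x" using mono'[of "Suc k" "length w"] kl bound by simp
    then show "\<exists>p. \<phi> k \<le> p \<and> p < \<phi> (Suc k) \<and> p \<in> chg L x"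
      using p by (auto simp: chg_def)
  qed
  then obtain p where p: "\<And>k. k\<in>chg M w \<Longrightarrow> \<phi> k \<le> p k \<and> p k < \<phi> (Suc k) \<and> p k \<in> chg L x"
    by metis
  have lt: "p k < p k'" if "k \<in> chg M w" "k' \<in> chg M w" "k < k'" for k k'
  proof -
    have "k' < length w" using that by (auto simp: chg_def)
    then have "\<phi> (Suc k) \<le> \<phi> k'" using mono'[of "Suc k" k'] that by simp
    then show ?thesis using p[OF that(1)] p[OF that(2)] by linarith
  qed
  have "inj_on p (chg M w)"
  proof (rule inj_onI)
    fix a b assume "a \<in> chg M w" "b \<in> chg M w" "p a = p b"
    then show "a = b" using lt[of a b] lt[of b a] by (metis less_irrefl linorder_neqE_nat)
  qed
  moreover have "p ` chg M w \<subseteq> chg L x" using p by auto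
  ultimately have "card (chg M w) \<le> card (chg L x)"
    using card_inj_on_le finite_chg by blast
  then show ?thesis by (simp add: Var_chg)
qed

lemma var_id:
  assumes "\<And>k. k < length w \<Longrightarrow> min_state L (take k w) = min_state L (take (Suc k) w)
      \<Longrightarrow> min_state M (take k w) = min_state M (take (Suc k) w)"
  shows "Var M w \<le> Var L w"
  using var_mono[of w "\<lambda>k. k" w L M] assms by simp

lemma run_in: "q \<in> Q \<Longrightarrow> \<forall>q\<in>Q. \<forall>a. delta q a \<in> Q \<Longrightarrow> run delta q w \<in> Q"
  by (induction w arbitrary: q) (auto simp: run_def)

lemma run_append: "run delta q (u @ v) = run delta (run delta q u) v"
  by (simp add: run_def)

lemma regular_iff: "regular L \<longleftrightarrow> finite (range (min_state L))"
proof
  assume "regular L"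
  then obtain Q :: "nat set" and delta q0 F where
    r: "finite Q" "q0 \<in> Q" "\<forall>q\<in>Q. \<forall>a. delta q a \<in> Q" "F \<subseteq> Q" "L = {w. run delta q0 w \<in> F}"
    unfolding regular_def by blast
  have "range (min_state L) \<subseteq> (\<lambda>q. {x. run delta q x \<in> F}) ` Q"
  proof
    fix X assume "X \<in> range (min_state L)"
    then obtain u where u: "X = min_state L u" by blast
    have "X = {x. run delta (run delta q0 u) x \<in> F}"
      using u r(5) by (simp add: min_state_def run_append)
    then show "X \<in> (\<lambda>q. {x. run delta q x \<in> F}) ` Q" using run_in[OF r(2) r(3)] by blast
  qed
  then show "finite (range (min_state L))" using r(1) finite_surj by blast
next
  assume fin: "finite (range (min_state L))"
  define S where "S = range (min_state L)"
  obtain n and g :: "'a list set \<Rightarrow> nat" where g: "inj_on g S"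
    using finite_imp_inj_to_nat_seg fin unfolding S_def by metis
  define delta where "delta = (\<lambda>n a. g {x. a # x \<in> inv_into S g n})"
  define q0 where "q0 = g (min_state L [])"
  define F where "F = g ` {X\<in>S. [] \<in> X}"
  have step: "delta (g (min_state L u)) a = g (min_state L (u @ [a]))" for u a
  proof -
    have "inv_into S g (g (min_state L u)) = min_state L u"
      using g by (simp add: S_def inv_into_f_f)
    then show ?thesis by (simp add: delta_def min_state_def)
  qed
  have runeq: "run delta (g (min_state L u)) w = g (min_state L (u @ w))" for u w
  proof (induction w arbitrary: u)
    case Nil then show ?case by (simp add: run_def)
  next
    case (Cons a w)
    have "run delta (g (min_state L u)) (a # w) = run delta (delta (g (min_state L u)) a) w"
      by (simp add: run_def)
    also have "\<dots> = run delta (g (min_state L (u @ [a]))) w" by (simp add: step)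
    also have "\<dots> = g (min_state L (u @ a # w))" using Cons.IH[of "u @ [a]"] by simp
    finally show ?case .
  qed
  have "finite (g ` S)" using fin S_def by simp
  moreover have "q0 \<in> g ` S" by (simp add: q0_def S_def)
  moreover have "\<forall>q\<in>g ` S. \<forall>a. delta q a \<in> g ` S"
    using step by (auto simp: S_def)
  moreover have "F \<subseteq> g ` S" by (auto simp: F_def)
  moreover have "L = {w. run delta q0 w \<in> F}"
  proof -
    have "run delta q0 w \<in> F \<longleftrightarrow> w \<in> L" for w
    proof -
      have "run delta q0 w = g (min_state L w)" using runeq[of "[]" w] by (simp add: q0_def)
      moreover have "g (min_state L w) \<in> F \<longleftrightarrow> [] \<in> min_state L w"
        using g unfolding F_def S_def by (auto simp: inj_on_eq_iff)
      ultimately show ?thesis by (simp add: min_state_def)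
    qed
    then show ?thesis by auto
  qed
  ultimately show "regular L" unfolding regular_def by blast
qed

lemma FV_iff: "L \<in> FV \<longleftrightarrow> finite (range (min_state L)) \<and> (\<exists>B. \<forall>x. Var L x \<le> B)"
  by (simp add: FV_def regular_iff finite_variation_def)

lemma FV_Un_Int:
  assumes "L1 \<in> FV" "L2 \<in> FV"
  shows "L1 \<union> L2 \<in> FV \<and> L1 \<inter> L2 \<in> FV"
proof -
  obtain B1 B2 where B: "\<forall>x. Var L1 x \<le> B1" "\<forall>x. Var L2 x \<le> B2"
    and f: "finite (range (min_state L1))" "finite (range (min_state L2))"
    using assms by (auto simp: FV_iff)
  have fp: "finite (range (min_state L1) \<times> range (min_state L2))" using f by simp
  have gen: "M \<in> FV" if op: "\<And>u. min_state M u = f (min_state L1 u) (min_state L2 u)" for M f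
  proof -
    have "range (min_state M) \<subseteq> (\<lambda>(A,B). f A B) ` (range (min_state L1) \<times> range (min_state L2))"
      using op by auto
    then have fin: "finite (range (min_state M))" using fp finite_surj by blast
    have "Var M x \<le> B1 + B2" for x
    proof -
      have "chg M x \<subseteq> chg L1 x \<union> chg L2 x" by (auto simp: chg_def op)
      then have "card (chg M x) \<le> card (chg L1 x \<union> chg L2 x)"
        by (simp add: card_mono finite_chg)
      also have "\<dots> \<le> card (chg L1 x) + card (chg L2 x)" by (rule card_Un_le)
      finally show ?thesis using B by (metis Var_chg add_mono order_trans)
    qed
    then show ?thesis using fin by (auto simp: FV_iff)
  qed
  show ?thesis
    by (intro conjI gen[where f="(\<union>)"] gen[where f="(\<inter>)"]) (auto simp: min_state_def)
qed

lemma FV_Compl: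
  assumes "L \<in> FV" shows "- L \<in> FV"
proof -
  obtain B where B: "\<forall>x. Var L x \<le> B" and f: "finite (range (min_state L))"
    using assms by (auto simp: FV_iff)
  have ms: "min_state (- L) u = - min_state L u" for u by (auto simp: min_state_def)
  have "range (min_state (- L)) = uminus ` range (min_state L)" by (auto simp: ms)
  then have "finite (range (min_state (- L)))" using f by simp
  moreover have "Var (- L) x \<le> B" for x
    using var_id[of x L "- L"] B by (simp add: ms) (metis order_trans)
  ultimately show ?thesis by (auto simp: FV_iff)
qed

lemma FV_lquot:
  assumes "L \<in> FV" shows "{x. v @ x \<in> L} \<in> FV"
proof -
  obtain B where B: "\<forall>x. Var L x \<le> B" and f: "finite (range (min_state L))"
    using assms by (auto simp: FV_iff)
  define M where "M = {x. v @ x \<in> L}"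
  have ms: "min_state M u = min_state L (v @ u)" for u by (auto simp: min_state_def M_def)
  have "range (min_state M) \<subseteq> range (min_state L)" by (auto simp: ms)
  then have "finite (range (min_state M))" using f finite_subset by blast
  moreover have "Var M w \<le> B" for w
  proof -
    have "Var M w \<le> Var L (v @ w)"
      by (rule var_mono[where \<phi>="\<lambda>k. length v + k"]) (auto simp: ms)
    then show ?thesis using B order_trans by blast
  qed
  ultimately show ?thesis by (auto simp: FV_iff M_def)
qed

lemma FV_rquot:
  assumes "L \<in> FV" shows "{x. x @ v \<in> L} \<in> FV"
proof -
  obtain B where B: "\<forall>x. Var L x \<le> B" and f: "finite (range (min_state L))"
    using assms by (auto simp: FV_iff)
  define M where "M = {x. x @ v \<in> L}"
  have ms: "min_state M u = (\<lambda>X. {x. x @ v \<in> X}) (min_state L u)" for u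
    by (auto simp: min_state_def M_def)
  have "range (min_state M) \<subseteq> (\<lambda>X. {x. x @ v \<in> X}) ` range (min_state L)"
    by (auto simp: ms)
  then have "finite (range (min_state M))" using f finite_surj by blast
  moreover have "Var M w \<le> B" for w
  proof -
    have "Var M w \<le> Var L w"
      by (rule var_id) (simp add: ms)
    then show ?thesis using B order_trans by blast
  qed
  ultimately show ?thesis by (auto simp: FV_iff M_def)
qed

lemma FV_hom:
  fixes h :: "'b list \<Rightarrow> 'a list"
  assumes h: "monoid_hom h" and "L \<in> FV" shows "h -` L \<in> FV"
proof -
  obtain B where B: "\<forall>x. Var L x \<le> B" and f: "finite (range (min_state L))"
    using assms by (auto simp: FV_iff)
  have happ: "h (x @ y) = h x @ h y" for x y using h by (simp add: monoid_hom_def)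
  have ms: "min_state (h -` L) u = h -` (min_state L (h u))" for u
    unfolding min_state_def by (simp add: happ)
  have "range (min_state (h -` L)) \<subseteq> (\<lambda>X. h -` X) ` range (min_state L)"
  proof
    fix X assume "X \<in> range (min_state (h -` L))"
    then obtain u where "X = min_state (h -` L) u" by blast
    then have "X = h -` (min_state L (h u))" by (simp add: ms)
    then show "X \<in> (\<lambda>X. h -` X) ` range (min_state L)" by blast
  qed
  then have "finite (range (min_state (h -` L)))" using f finite_surj by blast
  moreover have "Var (h -` L) w \<le> B" for w
  proof -
    have tk: "take (length (h (take k w))) (h w) = h (take k w)" for k
    proof -
      have "h w = h (take k w @ drop k w)" by simp
      also have "\<dots> = h (take k w) @ h (drop k w)" by (rule happ)
      finally have e: "h w = h (take k w) @ h (drop k w)" .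
      show ?thesis by (subst e) simp
    qed
    have "Var (h -` L) w \<le> Var L (h w)"
    proof (rule var_mono[where \<phi>="\<lambda>k. length (h (take k w))"])
      fix k assume "k < length w"
      have "take (Suc k) w = take k w @ take 1 (drop k w)" using take_add[of k 1 w] by simp
      then show "length (h (take k w)) \<le> length (h (take (Suc k) w))" by (simp add: happ)
    next
      show "length (h (take (length w) w)) \<le> length (h w)" by simp
    next
      fix k assume "min_state L (take (length (h (take k w))) (h w)) =
          min_state L (take (length (h (take (Suc k) w))) (h w))"
      then show "min_state (h -` L) (take k w) = min_state (h -` L) (take (Suc k) w)"
        by (simp add: tk ms)
    qed
    then show ?thesis using B order_trans by blast
  qed
  ultimately show ?thesis by (auto simp: FV_iff)
qed

theorem mainTheorem1:
  shows "(\<forall>L1 \<in> (FV :: 'a::finite list set set). \<forall>L2 \<in> FV. L1 \<union> L2 \<in> FV \<and> L1 \<inter> L2 \<in> FV)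
       \<and> (\<forall>L \<in> (FV :: 'a list set set). - L \<in> FV)
       \<and> (\<forall>L \<in> (FV :: 'a list set set). \<forall>u. {x. u @ x \<in> L} \<in> FV \<and> {x. x @ u \<in> L} \<in> FV)
       \<and> (\<forall>h :: 'b::finite list \<Rightarrow> 'a list. monoid_hom h \<longrightarrow>
            (\<forall>L \<in> (FV :: 'a list set set). h -` L \<in> FV))"
  by (intro conjI ballI allI impI FV_Un_Int[THEN conjunct1] FV_Un_Int[THEN conjunct2] FV_Compl FV_lquot FV_rquot FV_hom)

end
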